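(* Let $A\neq 0$ be a real symmetric $n\times n$ matrix such that $$\mathbb{1}^\top A\mathbb{1}\ge\sqrt{(n-k)^2+k^2}\,\|A\|_F$$ for some integer $k$ with $1\le k<n/2$. Then the spectral radius $\rho(A)$ is a simple eigenvalue of $A$ (equal to its largest eigenvalue), and a corresponding eigenvector can be chosen (up to sign) so that it has at least $n-k+1$ nonnegative entries, of which at least $n-k$ are strictly positive.
   Context: $\mathbb{1}\in\mathbb{R}^n$ is the all-ones vector and $\|A\|_F=\sqrt{\mathrm{tr}(AA^\top)}$ is the Frobenius norm. *)

theory Defs
  imports "Jordan_Normal_Form.Spectral_Radius"
begin

definition mat_tr :: "'a :: comm_ring_1 mat \<Rightarrow> 'a" where
  "mat_tr A = (\<Sum>i<dim_row A. A $$ (i, i))"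

definition frobenius_norm :: "real mat \<Rightarrow> real" where
  "frobenius_norm A = sqrt (mat_tr (A * transpose_mat A))"

end

theory Submission
  imports Defs
begin

lemma mat_tr_comm:
  fixes X :: "'a::comm_ring_1 mat"
  assumes "X \<in> carrier_mat n m" "Y \<in> carrier_mat m n"
  shows "mat_tr (X*Y) = mat_tr (Y*X)"
  using assms unfolding mat_tr_def
  by (simp add: scalar_prod_def atLeast0LessThan mult.commute) (rule sum.swap)

lemma sym_eig_real:
  fixes A :: "real mat"
  assumes A: "A \<in> carrier_mat n n" and sym: "transpose_mat A = A"
    and ev: "eigenvalue (map_mat complex_of_real A) \<mu>"
  shows "Im \<mu> = 0"
proof -
  let ?C = "map_mat complex_of_real A"
  obtain v where v: "v \<in> carrier_vec n" "v \<noteq> 0\<^sub>v n" "?C *\<^sub>v v = \<mu> \<cdot>\<^sub>v v"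
    using ev A unfolding eigenvalue_def eigenvector_def by auto
  have symA: "A$$(i,j) = A$$(j,i)" if "i<n" "j<n" for i j
    using arg_cong[OF sym, of "\<lambda>M. M$$(j,i)"] that A by auto
  define s where "s = (\<Sum>i<n. cnj (v$i) * (\<Sum>j<n. of_real (A$$(i,j)) * v$j))"
  have Cv: "(\<Sum>j<n. of_real (A$$(i,j)) * v$j) = \<mu> * v$i" if "i<n" for i
  proof -
    have "(?C *\<^sub>v v) $ i = \<mu> * v$i" using v(3) that v(1) by simp
    thus ?thesis using that A v(1) by (simp add: scalar_prod_def atLeast0LessThan)
  qed
  have "s = (\<Sum>i<n. cnj (v$i) * (\<mu> * v$i))"
    unfolding s_def by (rule sum.cong) (auto simp: Cv)
  also have "\<dots> = \<mu> * (\<Sum>i<n. cnj (v$i) * v$i)"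
    by (simp add: sum_distrib_left mult.left_commute)
  finally have s1: "s = \<mu> * (\<Sum>i<n. cnj (v$i) * v$i)" .
  have "cnj s = (\<Sum>i<n. \<Sum>j<n. v$i * of_real (A$$(i,j)) * cnj (v$j))"
    unfolding s_def by (simp add: sum_distrib_left mult.commute mult.left_commute)
  also have "\<dots> = (\<Sum>j<n. \<Sum>i<n. v$i * of_real (A$$(i,j)) * cnj (v$j))"
    by (rule sum.swap)
  also have "\<dots> = s"
    unfolding s_def by (auto simp: sum_distrib_left symA mult.commute mult.left_commute intro!: sum.cong)
  finally have "cnj s = s" .
  hence ims: "Im s = 0" by (metis complex_cnj_cancel_iff complex_cnj_complex_of_real  Reals_cnj_iff complex_is_Real_iff)
  define r where "r = (\<Sum>i<n. (cmod (v$i))^2)"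
  have N: "(\<Sum>i<n. cnj (v$i) * v$i) = of_real r"
    unfolding r_def of_real_sum by (rule sum.cong) (auto simp: complex_norm_square[symmetric] mult.commute)
  obtain i where i: "i < n" "v$i \<noteq> 0" using v(1,2) by (metis eq_vecI carrier_vecD index_zero_vec)
  have "r > 0" unfolding r_def
  proof (rule sum_pos2[of _ i])
    show "0 < (cmod (v$i))^2" using i by simp
  qed (use i in auto)
  have "Im s = Im \<mu> * r" using s1 N by simp
  with ims \<open>r>0\<close> show ?thesis by simp
qed


lemma sym_real_eigenvalue:
  fixes A :: "real mat"
  assumes A: "A \<in> carrier_mat n n" and sym: "transpose_mat A = A" and n: "0 < n"
  shows "\<exists>l. eigenvalue A l"
proof -
  let ?C = "map_mat complex_of_real A"
  have C: "?C \<in> carrier_mat n n" using A by simp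
  from spectrum_non_empty[OF C n] obtain \<mu> where mu: "eigenvalue ?C \<mu>"
    unfolding spectrum_def by auto
  have "Im \<mu> = 0" by (rule sym_eig_real[OF A sym mu])
  hence mu': "\<mu> = of_real (Re \<mu>)" by (simp add: complex_eq_iff)
  have "poly (char_poly ?C) \<mu> = 0" using mu eigenvalue_root_char_poly[OF C] by auto
  hence "poly (map_poly of_real (char_poly A)) (complex_of_real (Re \<mu>)) = 0"
    using of_real_hom.char_poly_hom[OF A] mu' by metis
  hence "poly (char_poly A) (Re \<mu>) = 0" by simp
  thus ?thesis using eigenvalue_root_char_poly[OF A] by auto
qed

lemma unit_eigenvector:
  fixes A :: "real mat"
  assumes A: "A \<in> carrier_mat n n" and ev: "eigenvalue A l"
  shows "\<exists>u. u \<in> carrier_vec n \<and> u \<bullet> u = 1 \<and> A *\<^sub>v u = l \<cdot>\<^sub>v u"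
proof -
  obtain v where v: "v \<in> carrier_vec n" "v \<noteq> 0\<^sub>v n" "A *\<^sub>v v = l \<cdot>\<^sub>v v"
    using ev A unfolding eigenvalue_def eigenvector_def by auto
  obtain i where i: "i < n" "v$i \<noteq> 0" using v(1,2) by (metis eq_vecI carrier_vecD index_zero_vec)
  have "v \<bullet> v = (\<Sum>j<n. (v$j)^2)" using v(1) by (simp add: scalar_prod_def atLeast0LessThan power2_eq_square)
  also have "\<dots> > 0"
  proof (rule sum_pos2[of _ i])
    show "0 < (v$i)^2" using i by simp
  qed (use i in auto)
  finally have pos: "v \<bullet> v > 0" .
  define u where "u = (1 / sqrt (v \<bullet> v)) \<cdot>\<^sub>v v"
  have "u \<in> carrier_vec n" unfolding u_def using v by simp
  moreover have "u \<bullet> u = 1" unfolding u_def using v pos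
    by (simp add: smult_scalar_prod_distrib scalar_prod_smult_distrib)
  moreover have "A *\<^sub>v u = l \<cdot>\<^sub>v u" unfolding u_def using v A
    by (simp add: mult_mat_vec smult_smult_assoc mult.commute)
  ultimately show ?thesis by blast
qed

definition kd :: "nat \<Rightarrow> nat \<Rightarrow> real" where "kd i j = (if i = j then 1 else 0)"
lemma sum_kd1: "i < n \<Longrightarrow> (\<Sum>k<n. kd i k * f k) = f i"
proof -
  assume i: "i < n"
  have "(\<Sum>k<n. kd i k * f k) = (\<Sum>k<n. if i = k then f k else 0)" by (rule sum.cong) (auto simp: kd_def)
  also have "\<dots> = f i" using i by (subst sum.delta') auto
  finally show ?thesis .
qed
lemma sum_kd2: "j < n \<Longrightarrow> (\<Sum>k<n. f k * kd k j) = f j"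
proof -
  assume j: "j < n"
  have "(\<Sum>k<n. f k * kd k j) = (\<Sum>k<n. kd j k * f k)" by (rule sum.cong) (auto simp: kd_def)
  thus ?thesis using sum_kd1[OF j] by simp
qed

lemma householder:
  fixes u :: "real vec"
  assumes u: "u \<in> carrier_vec n" and n: "0 < n" and nu: "u \<bullet> u = 1"
  shows "\<exists>W \<in> carrier_mat n n. transpose_mat W * W = 1\<^sub>m n \<and> col W 0 = u"
proof -
  have sq1: "(\<Sum>i<n. (u$i)^2) = 1" using nu u by (simp add: scalar_prod_def atLeast0LessThan power2_eq_square)
  show ?thesis
  proof (cases "u $ 0 = 1")
    case True
    have split: "(\<Sum>i<n. (u$i)^2) = (u$0)^2 + (\<Sum>i\<in>{1..<n}. (u$i)^2)"
      using n by (simp add: lessThan_atLeast0 sum.atLeast_Suc_lessThan)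
    hence "(\<Sum>i\<in>{1..<n}. (u$i)^2) = 0" using sq1 True by simp
    hence z: "\<forall>i\<in>{1..<n}. (u$i)^2 = 0" by (subst sum_nonneg_eq_0_iff[symmetric]) auto
    have "col (1\<^sub>m n) 0 = u"
      by (rule eq_vecI) (use u n True z in \<open>auto simp: col_def\<close>)
    thus ?thesis by (intro bexI[of _ "1\<^sub>m n"]) auto
  next
    case False
    define w where "w i = u$i - (if i=0 then 1 else 0)" for i
    define c where "c = (\<Sum>i<n. (w i)^2)"
    have wsq: "(w i)^2 = (u$i)^2 - 2 * (if i = 0 then u$i else 0) + (if i = 0 then 1 else 0)" for i
      unfolding w_def by (cases "i = 0") (auto simp: power2_eq_square algebra_simps)
    have "c = (\<Sum>i<n. (u$i)^2) - 2 * (\<Sum>i<n. (if i = 0 then u$i else 0)) + (\<Sum>i<n. (if i = 0 then 1 else 0))"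
      unfolding c_def wsq by (simp add: sum.distrib sum_subtractf flip: sum_distrib_left)
    also have "\<dots> = 2 - 2 * u$0"
    proof -
      have a: "(\<Sum>i<n. (if i = 0 then u$i else 0)) = u$0" using n by (simp add: sum.delta)
      have b: "(\<Sum>i<n. (if i = 0 then 1 else 0::real)) = 1" using n by (simp add: sum.delta)
      show ?thesis unfolding a b sq1 by simp
    qed
    finally have c: "c = 2 - 2 * u$0" .
    hence c0: "c \<noteq> 0" using False by simp
    define t where "t = 2 / c"
    have tc: "t * c = 2" unfolding t_def using c0 by simp
    define W where "W = mat n n (\<lambda>(i,j). kd i j - t * w i * w j)"
    have Wc: "W \<in> carrier_mat n n" unfolding W_def by simp
    have WT: "transpose_mat W = W" unfolding W_def by (rule eq_matI) (auto simp: kd_def)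
    have "W * W = 1\<^sub>m n"
    proof (rule eq_matI)
      fix i j assume ij: "i < dim_row (1\<^sub>m n)" "j < dim_col (1\<^sub>m n)"
      hence ij: "i < n" "j < n" by auto
      have "(W * W) $$ (i,j) = (\<Sum>k<n. (kd i k - t * w i * w k) * (kd k j - t * w k * w j))"
        using ij unfolding W_def by (simp add: scalar_prod_def atLeast0LessThan)
      also have "\<dots> = (\<Sum>k<n. kd i k * kd k j - t * w j * (kd i k * w k) - t * w i * (w k * kd k j) + (t*t*w i*w j) * (w k)^2)"
        by (rule sum.cong) (auto simp: algebra_simps power2_eq_square)
      also have "\<dots> = (\<Sum>k<n. kd i k * kd k j) - t * w j * (\<Sum>k<n. kd i k * w k) - t * w i * (\<Sum>k<n. w k * kd k j) + (t*t*w i*w j) * c"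
        unfolding c_def by (simp add: sum.distrib sum_subtractf sum_distrib_left)
      also have "\<dots> = kd i j - 2 * t * w i * w j + t * (t * c) * w i * w j"
      proof -
        have e1: "(\<Sum>k<n. kd i k * kd k j) = kd i j" using sum_kd1[OF ij(1), of "\<lambda>k. kd k j"] by simp
        have e2: "(\<Sum>k<n. kd i k * w k) = w i" using sum_kd1[OF ij(1), of w] by simp
        have e3: "(\<Sum>k<n. w k * kd k j) = w j" using sum_kd2[OF ij(2), of w] by simp
        show ?thesis unfolding e1 e2 e3 by (simp add: algebra_simps)
      qed
      also have "\<dots> = kd i j" using tc by simp
      finally show "(W * W) $$ (i,j) = 1\<^sub>m n $$ (i,j)" using ij by (simp add: kd_def)
    qed (auto simp: W_def)
    moreover have "col W 0 = u"
    proof (rule eq_vecI)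
      fix i assume "i < dim_vec u"
      hence i: "i < n" using u by simp
      have w0: "t * w 0 = -1" unfolding t_def w_def c using False by (simp add: field_simps)
      have "col W 0 $ i = kd i 0 - (t * w 0) * w i" unfolding W_def using i n by (simp add: col_def)
      also have "\<dots> = kd i 0 + w i" using w0 by simp
      also have "\<dots> = u $ i" unfolding w_def kd_def by simp
      finally show "col W 0 $ i = u $ i" .
    qed (use u W_def in simp)
    ultimately show ?thesis using Wc WT by (intro bexI[of _ W]) auto
  qed
qed


lemma spectral:
  fixes A :: "real mat"
  assumes "A \<in> carrier_mat n n" "transpose_mat A = A"
  shows "\<exists>U D. U \<in> carrier_mat n n \<and> D \<in> carrier_mat n n \<and> diagonal_mat D \<and>
     transpose_mat U * U = 1\<^sub>m n \<and> A = U * D * transpose_mat U"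
  using assms
proof (induction n arbitrary: A)
  case 0
  show ?case
    by (rule exI[of _ "1\<^sub>m 0"], rule exI[of _ "0\<^sub>m 0 0"]) (use 0 in \<open>auto intro!: eq_matI simp: diagonal_mat_def\<close>)
next
  case (Suc n)
  note A = Suc.prems(1) and sym = Suc.prems(2)
  let ?m = "Suc n"
  note assoc = assoc_mult_mat[of _ ?m ?m _ ?m _ ?m]
  obtain l where "eigenvalue A l" using sym_real_eigenvalue[OF A sym] by auto
  then obtain u where u: "u \<in> carrier_vec ?m" "u \<bullet> u = 1" "A *\<^sub>v u = l \<cdot>\<^sub>v u"
    using unit_eigenvector[OF A] by blast
  obtain W where W: "W \<in> carrier_mat ?m ?m" "transpose_mat W * W = 1\<^sub>m ?m" "col W 0 = u"
    using householder[OF u(1) _ u(2)] by auto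
  have WT: "transpose_mat W \<in> carrier_mat ?m ?m" using W by simp
  have WWt: "W * transpose_mat W = 1\<^sub>m ?m" using mat_mult_left_right_inverse[OF WT W(1) W(2)] .
  define A' where "A' = transpose_mat W * A * W"
  have A'c: "A' \<in> carrier_mat ?m ?m" unfolding A'_def using W A by simp
  have t1: "transpose_mat A' = transpose_mat W * transpose_mat (transpose_mat W * A)"
    unfolding A'_def by (rule transpose_mult) (use W A in auto)
  have "transpose_mat (transpose_mat W * A) = transpose_mat A * transpose_mat (transpose_mat W)"
    by (rule transpose_mult) (use W A in auto)
  hence t2: "transpose_mat (transpose_mat W * A) = A * W" using sym by simp
  have "transpose_mat A' = transpose_mat W * (A * W)" using t1 t2 by simp
  also have "\<dots> = A'" unfolding A'_def using W A by (simp add: assoc)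
  finally have A'sym: "transpose_mat A' = A'" .
  have col0: "A' $$ (i,0) = (if i = 0 then l else 0)" if i: "i < ?m" for i
  proof -
    have "A' $$ (i,0) = (transpose_mat W * (A * W)) $$ (i,0)" unfolding A'_def using W A by (simp add: assoc)
    also have "\<dots> = col W i \<bullet> (A *\<^sub>v u)" using i W A by (simp add: mult_mat_vec_def)
    also have "\<dots> = l * (col W i \<bullet> u)" using u W i by simp
    also have "col W i \<bullet> u = (transpose_mat W * W) $$ (i,0)" using i W(1,3) by simp
    also have "\<dots> = (if i = 0 then 1 else 0)" using W(2) i by simp
    finally show ?thesis by simp
  qed
  have row0: "A' $$ (0,j) = (if j = 0 then l else 0)" if j: "j < ?m" for j
  proof -
    have "A' $$ (0,j) = transpose_mat A' $$ (0,j)" using A'sym by simp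
    also have "\<dots> = A' $$ (j,0)" using j A'c by simp
    finally show ?thesis using col0[OF j] by simp
  qed
  define A3 where "A3 = mat n n (\<lambda>(i,j). A' $$ (Suc i, Suc j))"
  have A3c: "A3 \<in> carrier_mat n n" unfolding A3_def by simp
  have A3sym: "transpose_mat A3 = A3"
  proof (rule eq_matI)
    fix i j assume ij: "i < dim_row A3" "j < dim_col A3"
    hence ij: "i < n" "j < n" using A3c by auto
    have "A' $$ (Suc j, Suc i) = transpose_mat A' $$ (Suc i, Suc j)" using ij A'c by simp
    thus "transpose_mat A3 $$ (i,j) = A3 $$ (i,j)" using ij A'sym unfolding A3_def by simp
  qed (auto simp: A3_def)
  obtain V D3 where V: "V \<in> carrier_mat n n" "D3 \<in> carrier_mat n n" "diagonal_mat D3"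
    "transpose_mat V * V = 1\<^sub>m n" "A3 = V * D3 * transpose_mat V"
    using Suc.IH[OF A3c A3sym] by blast
  define L where "L = mat 1 1 (\<lambda>_. l)"
  define B where "B = four_block_mat (1\<^sub>m 1) (0\<^sub>m 1 n) (0\<^sub>m n 1) V"
  define D where "D = four_block_mat L (0\<^sub>m 1 n) (0\<^sub>m n 1) D3"
  have Lc: "L \<in> carrier_mat 1 1" unfolding L_def by simp
  have "B \<in> carrier_mat (1+n) (1+n)" unfolding B_def
    by (rule four_block_carrier_mat) (use V in auto)
  hence Bc: "B \<in> carrier_mat ?m ?m" by simp
  have "D \<in> carrier_mat (1+n) (1+n)" unfolding D_def
    by (rule four_block_carrier_mat) (use V Lc in auto)
  hence Dc: "D \<in> carrier_mat ?m ?m" by simp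
  have VT: "transpose_mat V \<in> carrier_mat n n" using V by simp
  have VD3: "V * D3 \<in> carrier_mat n n" using V by simp
  have BT: "transpose_mat B = four_block_mat (1\<^sub>m 1) (0\<^sub>m 1 n) (0\<^sub>m n 1) (transpose_mat V)"
    unfolding B_def using V by (subst transpose_four_block_mat) auto
  have BTB: "transpose_mat B * B = 1\<^sub>m ?m"
    unfolding BT unfolding B_def using V
    by (subst mult_four_block_mat[OF one_carrier_mat zero_carrier_mat zero_carrier_mat VT one_carrier_mat zero_carrier_mat zero_carrier_mat V(1)]) auto
  have BD: "B * D = four_block_mat L (0\<^sub>m 1 n) (0\<^sub>m n 1) (V * D3)"
    unfolding B_def D_def using V Lc
    by (subst mult_four_block_mat[OF one_carrier_mat zero_carrier_mat zero_carrier_mat V(1) Lc zero_carrier_mat zero_carrier_mat V(2)]) auto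
  have BDBT: "B * D * transpose_mat B = four_block_mat L (0\<^sub>m 1 n) (0\<^sub>m n 1) A3"
    unfolding BD BT V(5) using V Lc
    by (subst mult_four_block_mat[OF Lc zero_carrier_mat zero_carrier_mat VD3 one_carrier_mat zero_carrier_mat zero_carrier_mat VT]) auto
  have BDBT': "B * D * transpose_mat B = A'"
    unfolding BDBT
  proof (rule eq_matI)
    fix i j assume ij: "i < dim_row A'" "j < dim_col A'"
    hence ij: "i < ?m" "j < ?m" using A'c by auto
    show "four_block_mat L (0\<^sub>m 1 n) (0\<^sub>m n 1) A3 $$ (i, j) = A' $$ (i, j)"
    proof (cases "i = 0")
      case True thus ?thesis using ij row0 Lc A3c by (simp add: L_def)
    next
      case False
      then obtain i' where i': "i = Suc i'" by (cases i) auto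
      show ?thesis
      proof (cases "j = 0")
        case True thus ?thesis using ij col0 Lc A3c i' by simp
      next
        case False
        then obtain j' where j': "j = Suc j'" by (cases j) auto
        show ?thesis using ij Lc A3c i' j' by (simp add: A3_def)
      qed
    qed
  qed (use A'c Lc A3c in auto)
  define U where "U = W * B"
  have Uc: "U \<in> carrier_mat ?m ?m" unfolding U_def using W Bc by simp
  have WTWX: "transpose_mat W * (W * X) = X" if "X \<in> carrier_mat ?m ?m" for X
    using that W WT by (metis assoc W(2) left_mult_one_mat)
  have WWTX: "W * (transpose_mat W * X) = X" if "X \<in> carrier_mat ?m ?m" for X
    using that W WT by (metis assoc WWt left_mult_one_mat)
  have BTc: "transpose_mat B \<in> carrier_mat ?m ?m" using Bc by simp
  have "transpose_mat U * U = transpose_mat B * (transpose_mat W * (W * B))"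
    unfolding U_def using W Bc by (simp add: transpose_mult[of _ ?m ?m] assoc)
  also have "\<dots> = 1\<^sub>m ?m" using WTWX[OF Bc] BTB by simp
  finally have UTU: "transpose_mat U * U = 1\<^sub>m ?m" .
  have e: "B * (D * (transpose_mat B * X)) = transpose_mat W * (A * (W * X))" if X: "X \<in> carrier_mat ?m ?m" for X
  proof -
    have "B * D * transpose_mat B * X = A' * X" using BDBT' by simp
    thus ?thesis unfolding A'_def using X W A Bc Dc BTc by (simp add: assoc)
  qed
  have "U * D * transpose_mat U = W * (B * (D * (transpose_mat B * transpose_mat W)))"
    unfolding U_def using W Bc Dc BTc by (simp add: transpose_mult[of _ ?m ?m] assoc)
  also have "\<dots> = W * (transpose_mat W * (A * (W * transpose_mat W)))" using e[OF WT] by simp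
  also have "\<dots> = A" using WWTX A WWt by simp
  finally have "A = U * D * transpose_mat U" by simp
  moreover have "diagonal_mat D" using V(2,3) Lc unfolding D_def diagonal_mat_def by auto
  ultimately show ?case using Uc Dc UTU by blast
qed


lemma char_poly_diag_sim:
  fixes A :: "'a::field mat"
  assumes A: "A \<in> carrier_mat n n" and D: "D \<in> carrier_mat n n" and dg: "diagonal_mat D"
    and P: "P \<in> carrier_mat n n" and Q: "Q \<in> carrier_mat n n"
    and PQ: "P * Q = 1\<^sub>m n" and QP: "Q * P = 1\<^sub>m n" and APDQ: "A = P * D * Q"
  shows "char_poly A = (\<Prod>i<n. [:- D$$(i,i), 1:])"
proof -
  have "similar_mat A D" unfolding similar_mat_def
    using similar_mat_witI[OF PQ QP APDQ A D P Q] by blast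
  hence "char_poly A = char_poly D" by (rule char_poly_similar)
  also have ut: "upper_triangular D" using dg D unfolding diagonal_mat_def upper_triangular_def by auto
  have "char_poly D = (\<Prod>a\<leftarrow>diag_mat D. [:- a, 1:])" by (rule char_poly_upper_triangular[OF D ut])
  also have "\<dots> = (\<Prod>i\<leftarrow>[0..<n]. [:- D$$(i,i), 1:])" using D unfolding diag_mat_def by (simp add: comp_def)
  also have "\<dots> = (\<Prod>i\<in>set [0..<n]. [:- D$$(i,i), 1:])" by (subst prod.distinct_set_conv_list) auto
  also have "\<dots> = (\<Prod>i<n. [:- D$$(i,i), 1:])" by (simp add: atLeast0LessThan)
  finally show ?thesis .
qed

lemma poly_prod_lin_root:
  fixes d :: "nat \<Rightarrow> 'a::idom"
  shows "poly (\<Prod>i<n. [:- d i, 1:]) x = 0 \<longleftrightarrow> (\<exists>i<n. x = d i)"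
  by (auto simp: poly_prod)

lemma order_prod_lin:
  fixes d :: "nat \<Rightarrow> 'a::idom"
  shows "order a (\<Prod>i<n. [:- d i, 1:]) = card {i. i < n \<and> d i = a}"
proof (induction n)
  case 0 thus ?case by simp
next
  case (Suc n)
  have p0: "(\<Prod>i<n. [:- d i, 1:]) \<noteq> 0" by (subst prod_zero_iff) auto
  have l0: "[:- d n, 1:] \<noteq> 0" by simp
  have ne: "(\<Prod>i<n. [:- d i, 1:]) * [:- d n, 1:] \<noteq> 0"
    using p0 l0 no_zero_divisors by blast
  have o1: "order a [:- d n, 1:] = (if d n = a then 1 else 0)"
  proof (cases "d n = a")
    case True thus ?thesis using order_power_n_n[of a 1] by simp
  next
    case False thus ?thesis using order_0I[of "[:- d n, 1:]" a] by simp
  qed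
  have "{i. i < Suc n \<and> d i = a} = {i. i < n \<and> d i = a} \<union> (if d n = a then {n} else {})" by (auto simp: less_Suc_eq)
  hence c: "card {i. i < Suc n \<and> d i = a} = card {i. i < n \<and> d i = a} + (if d n = a then 1 else 0)"
    by (auto simp: card_insert_if)
  show ?case unfolding prod.lessThan_Suc order_mult[OF ne] Suc o1 c ..
qed


lemma cs_sum:
  fixes v :: "nat \<Rightarrow> real"
  assumes "finite S"
  shows "(\<Sum>i\<in>S. v i)^2 \<le> real (card S) * (\<Sum>i\<in>S. (v i)^2)"
proof -
  have "0 \<le> (\<Sum>i\<in>S. \<Sum>j\<in>S. (v i - v j)^2)" by (intro sum_nonneg) auto
  also have "(\<Sum>i\<in>S. \<Sum>j\<in>S. (v i - v j)^2) = (\<Sum>i\<in>S. \<Sum>j\<in>S. (v i)^2 + (v j)^2 - 2 * (v i * v j))"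
    by (simp add: power2_eq_square algebra_simps)
  also have "\<dots> = (\<Sum>i\<in>S. real (card S) * (v i)^2 + (\<Sum>j\<in>S. (v j)^2) - 2 * v i * (\<Sum>j\<in>S. v j))"
  proof (rule sum.cong[OF refl])
    fix i assume "i \<in> S"
    have "(\<Sum>j\<in>S. (v i)^2 + (v j)^2 - 2 * (v i * v j)) = (\<Sum>j\<in>S. (v i)^2) + (\<Sum>j\<in>S. (v j)^2) - (\<Sum>j\<in>S. 2 * v i * v j)"
      by (simp add: sum.distrib sum_subtractf mult.assoc)
    also have "(\<Sum>j\<in>S. 2 * v i * v j) = 2 * v i * (\<Sum>j\<in>S. v j)" by (rule sum_distrib_left[symmetric])
    finally show "(\<Sum>j\<in>S. (v i)^2 + (v j)^2 - 2 * (v i * v j)) = real (card S) * (v i)^2 + (\<Sum>j\<in>S. (v j)^2) - 2 * v i * (\<Sum>j\<in>S. v j)"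
      by simp
  qed
  also have "\<dots> = real (card S) * (\<Sum>i\<in>S. (v i)^2) + real (card S) * (\<Sum>j\<in>S. (v j)^2) - 2 * (\<Sum>i\<in>S. v i) * (\<Sum>j\<in>S. v j)"
    by (simp add: sum.distrib sum_subtractf sum_distrib_left[symmetric] sum_distrib_right[symmetric])
  also have "\<dots> = 2 * real (card S) * (\<Sum>i\<in>S. (v i)^2) - 2 * (\<Sum>i\<in>S. v i)^2"
    by (simp add: power2_eq_square)
  finally show ?thesis by simp
qed

lemma two_s_gt:
  fixes n k :: nat
  assumes "2 * k < n"
  shows "real n ^ 2 < 2 * ((real n - real k)^2 + (real k)^2)"
proof -
  have "2 * ((real n - real k)^2 + (real k)^2) - real n ^ 2 = (real n - 2 * real k)^2"
    by (simp add: power2_eq_square algebra_simps)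
  moreover have "real n - 2 * real k > 0" using assms by linarith
  ultimately show ?thesis by (smt (verit) zero_less_power)
qed


lemma sum_two_le:
  fixes f :: "nat \<Rightarrow> real"
  assumes "i < n" "j < n" "i \<noteq> j" "\<And>l. l < n \<Longrightarrow> 0 \<le> f l"
  shows "f i + f j \<le> (\<Sum>l<n. f l)"
proof -
  have "(\<Sum>l\<in>{i,j}. f l) \<le> (\<Sum>l<n. f l)"
    by (rule sum_mono2) (use assms in auto)
  thus ?thesis using assms(3) by simp
qed

lemma key_real:
  fixes d c :: "nat \<Rightarrow> real" and n k i0 :: nat
  assumes k: "1 \<le> k" "2*k < n"
    and sumc: "(\<Sum>i<n. (c i)^2) = real n"
    and Spos: "(\<Sum>i<n. (d i)^2) > 0"
    and q: "sqrt ((real n - real k)^2 + (real k)^2) * sqrt (\<Sum>i<n. (d i)^2) \<le> (\<Sum>i<n. d i * (c i)^2)"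
    and i0: "i0 < n" and amax: "\<And>i. i<n \<Longrightarrow> d i \<le> d i0"
  shows "(\<forall>j<n. j \<noteq> i0 \<longrightarrow> \<bar>d j\<bar> < d i0) \<and> real n - real k \<le> (c i0)^2"
proof -
  define S where "S = (\<Sum>i<n. (d i)^2)"
  define a where "a = d i0"
  define s2 where "s2 = (real n - real k)^2 + (real k)^2"
  define Q where "Q = (\<Sum>i<n. d i * (c i)^2)"
  have s2gt: "real n ^2 < 2 * s2" using two_s_gt[OF k(2)] unfolding s2_def .
  have "(real k)^2 > 0" using k by simp
  moreover have "0 \<le> (real n - real k)^2" by simp
  ultimately have s2pos: "s2 > 0" unfolding s2_def by linarith
  have S0: "S > 0" using Spos unfolding S_def .
  have Q0: "sqrt s2 * sqrt S \<le> Q" using q unfolding s2_def S_def Q_def .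
  have sqS: "sqrt s2 * sqrt S > 0" using s2pos S0 by simp
  have Qpos: "Q > 0" using Q0 sqS by linarith
  have "(sqrt s2 * sqrt S)^2 \<le> Q^2" by (rule power_mono[OF Q0]) (use sqS in simp)
  hence Qsq: "s2 * S \<le> Q^2" using s2pos S0 by (simp add: power_mult_distrib)
  have "Q \<le> (\<Sum>i<n. a * (c i)^2)" unfolding Q_def a_def
    by (rule sum_mono) (use amax in \<open>auto intro: mult_right_mono\<close>)
  also have "\<dots> = a * real n" by (simp add: sum_distrib_left[symmetric] sumc)
  finally have Qle: "Q \<le> a * real n" .
  have npos: "real n > 0" using k by simp
  have apos: "a > 0" using Qle Qpos npos by (smt (verit) mult_nonpos_nonneg)
  have Qsq2: "Q^2 \<le> a^2 * (real n)^2"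
    using power_mono[OF Qle, of 2] Qpos by (simp add: power_mult_distrib)
  have part1: "\<forall>j<n. j \<noteq> i0 \<longrightarrow> \<bar>d j\<bar> < a"
  proof (intro allI impI, rule ccontr)
    fix j assume j: "j<n" "j \<noteq> i0" "\<not> \<bar>d j\<bar> < a"
    have "(d i0)^2 + (d j)^2 \<le> S" unfolding S_def
      by (rule sum_two_le) (use i0 j in auto)
    moreover have "a^2 \<le> (d j)^2" using j(3) apos
      by (metis abs_ge_zero linorder_not_less power2_abs power_mono less_imp_le)
    ultimately have "2 * a^2 \<le> S" unfolding a_def by simp
    hence "s2 * (2 * a^2) \<le> s2 * S" using s2pos by simp
    hence "a^2 * (2 * s2) \<le> a^2 * (real n)^2" using Qsq Qsq2 by (simp add: algebra_simps)
    hence "2 * s2 \<le> (real n)^2" using apos by simp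
    thus False using s2gt by simp
  qed
  have n2: "2 \<le> n" using k by simp
  define B where "B = (\<lambda>j. \<bar>d j\<bar>) ` ({..<n} - {i0})"
  have Bfin: "finite B" unfolding B_def by simp
  obtain j0 where j0: "j0 < n" "j0 \<noteq> i0" using n2 i0
    by (metis One_nat_def Suc_1 Suc_le_lessD less_Suc_eq_0_disj less_one not_less_eq)
  have Bne: "B \<noteq> {}" unfolding B_def using j0 by auto
  define b where "b = Max B"
  obtain j1 where j1: "j1 < n" "j1 \<noteq> i0" "b = \<bar>d j1\<bar>"
    using Max_in[OF Bfin Bne] unfolding b_def B_def by auto
  have bge: "d j \<le> b" if "j < n" "j \<noteq> i0" for j
  proof -
    have "\<bar>d j\<bar> \<le> b" unfolding b_def by (rule Max_ge[OF Bfin]) (use that in \<open>auto simp: B_def\<close>)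
    thus ?thesis by simp
  qed
  have b0: "b \<ge> 0" using j1 by simp
  have blt: "b < a" using part1 j1 by simp
  have "(d i0)^2 + (d j1)^2 \<le> S" unfolding S_def
    by (rule sum_two_le) (use i0 j1 in auto)
  hence abS: "a^2 + b^2 \<le> S" unfolding a_def using j1(3) by simp
  define x where "x = (c i0)^2"
  have x0: "x \<ge> 0" unfolding x_def by simp
  have fin: "finite {..<n}" by simp
  have i0m: "i0 \<in> {..<n}" using i0 by simp
  have splitQ: "Q = a * x + (\<Sum>j\<in>{..<n}-{i0}. d j * (c j)^2)"
    unfolding Q_def a_def x_def using sum.remove[OF fin i0m, of "\<lambda>j. d j * (c j)^2"] by simp
  have rest: "(\<Sum>j\<in>{..<n}-{i0}. (c j)^2) = real n - x"
    using sum.remove[OF fin i0m, of "\<lambda>j. (c j)^2"] sumc unfolding x_def by simp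
  have "(\<Sum>j\<in>{..<n}-{i0}. d j * (c j)^2) \<le> (\<Sum>j\<in>{..<n}-{i0}. b * (c j)^2)"
    by (rule sum_mono) (use bge in \<open>auto intro: mult_right_mono\<close>)
  also have "\<dots> = b * (real n - x)" by (simp add: sum_distrib_left[symmetric] rest)
  finally have Qb: "Q \<le> a * x + b * (real n - x)" using splitQ by simp
  have part2: "real n - real k \<le> x"
  proof (rule ccontr)
    assume nx: "\<not> real n - real k \<le> x"
    show False
    proof (cases "x \<le> real k")
      case True
      have "a * x + b * (real n - x) - (a + b) * real n / 2 = (a - b) * (x - real n / 2)"
        by (simp add: field_simps)
      moreover have "(a - b) * (x - real n / 2) \<le> 0"
        using blt True k(2) by (intro mult_nonneg_nonpos) auto
      ultimately have "Q \<le> (a + b) * real n / 2" using Qb by linarith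
      hence "Q^2 \<le> ((a + b) * real n / 2)^2" using Qpos by (intro power_mono) auto
      also have "\<dots> = (a + b)^2 * (real n)^2 / 4" by (simp add: power_mult_distrib power_divide)
      also have "(a + b)^2 \<le> 2 * (a^2 + b^2)"
        using zero_le_power2[of "a - b"] by (simp add: power2_eq_square algebra_simps)
      hence "(a + b)^2 * (real n)^2 / 4 \<le> 2 * S * (real n)^2 / 4"
        using abS by (intro divide_right_mono mult_right_mono) auto
      finally have "s2 * S \<le> S * ((real n)^2 / 2)" using Qsq by simp
      hence "s2 \<le> (real n)^2 / 2" using S0 by (simp add: mult.commute)
      thus False using s2gt by simp
    next
      case False
      have cs: "(a * x + b * (real n - x))^2 \<le> (a^2 + b^2) * (x^2 + (real n - x)^2)"
      proof -
        have "(a^2 + b^2) * (x^2 + (real n - x)^2) - (a * x + b * (real n - x))^2 = (a * (real n - x) - b * x)^2"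
          by (simp add: power2_eq_square algebra_simps)
        thus ?thesis using zero_le_power2[of "a * (real n - x) - b * x"] by linarith
      qed
      have "Q^2 \<le> (a * x + b * (real n - x))^2" using Qpos Qb by (intro power_mono) auto
      also note cs
      also have "(a^2 + b^2) * (x^2 + (real n - x)^2) \<le> S * (x^2 + (real n - x)^2)"
        using abS by (intro mult_right_mono) auto
      finally have "s2 * S \<le> S * (x^2 + (real n - x)^2)" using Qsq by simp
      hence le: "s2 \<le> x^2 + (real n - x)^2" using S0 by (simp add: mult.commute)
      have "x^2 + (real n - x)^2 - s2 = 2 * (x - real k) * (x - (real n - real k))"
        unfolding s2_def by (simp add: power2_eq_square algebra_simps)
      moreover have "2 * (x - real k) * (x - (real n - real k)) < 0"
        using False nx by (intro mult_pos_neg) auto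
      ultimately show False using le by linarith
    qed
  qed
  show ?thesis using part1 part2 unfolding a_def x_def by simp
qed


lemma card_signs:
  fixes v :: "nat \<Rightarrow> real"
  assumes v2: "(\<Sum>i<n. (v i)^2) = 1" and s0: "0 \<le> (\<Sum>i<n. v i)"
    and sk: "real n - real k \<le> (\<Sum>i<n. v i)^2" and k: "1 \<le> k" "k < n"
  shows "n - k + 1 \<le> card {i. i<n \<and> 0 \<le> v i} \<and> n - k \<le> card {i. i<n \<and> 0 < v i}"
proof -
  define S where "S = (\<Sum>i<n. v i)"
  have bound: "(\<Sum>i\<in>X. v i)^2 \<le> real (card X)" if X: "X \<subseteq> {..<n}" for X
  proof -
    have fX: "finite X" using X finite_subset by blast
    have "(\<Sum>i\<in>X. (v i)^2) \<le> (\<Sum>i<n. (v i)^2)" by (rule sum_mono2) (use X in auto)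
    hence "(\<Sum>i\<in>X. (v i)^2) \<le> 1" using v2 by simp
    hence "real (card X) * (\<Sum>i\<in>X. (v i)^2) \<le> real (card X)"
      by (simp add: mult_left_le)
    thus ?thesis using cs_sum[OF fX, of v] by linarith
  qed
  have split: "S = (\<Sum>i\<in>{..<n} - X. v i) + (\<Sum>i\<in>X. v i)" if X: "X \<subseteq> {..<n}" for X
    unfolding S_def by (rule sum.subset_diff[OF X]) simp
  define P where "P = {i. i<n \<and> 0 < v i}"
  have PX: "P \<subseteq> {..<n}" unfolding P_def by auto
  have "(\<Sum>i\<in>{..<n} - P. v i) \<le> 0" by (rule sum_nonpos) (auto simp: P_def)
  hence "S \<le> (\<Sum>i\<in>P. v i)" using split[OF PX] by simp
  hence "S^2 \<le> (\<Sum>i\<in>P. v i)^2" using s0 unfolding S_def by (intro power_mono) auto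
  hence "real n - real k \<le> real (card P)" using bound[OF PX] sk unfolding S_def by linarith
  hence c1: "n - k \<le> card P" by linarith
  define P' where "P' = {i. i<n \<and> 0 \<le> v i}"
  have PX': "P' \<subseteq> {..<n}" unfolding P'_def by auto
  have c2: "n - k + 1 \<le> card P'"
  proof (rule ccontr)
    assume "\<not> n - k + 1 \<le> card P'"
    hence cP: "card P' \<le> n - k" by simp
    have "card ({..<n} - P') = n - card P'" using PX' by (simp add: card_Diff_subset finite_subset)
    hence "card ({..<n} - P') > 0" using cP k by simp
    then obtain j where j: "j \<in> {..<n} - P'" by (metis card_gt_0_iff ex_in_conv)
    have "(\<Sum>i\<in>{..<n} - P'. v i) < 0"
    proof -
      have "(\<Sum>i\<in>{..<n} - P'. - v i) > 0"
        by (rule sum_pos2[of _ j]) (use j in \<open>auto simp: P'_def\<close>)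
      thus ?thesis by (simp add: sum_negf)
    qed
    hence lt: "S < (\<Sum>i\<in>P'. v i)" using split[OF PX'] by simp
    hence "S^2 < (\<Sum>i\<in>P'. v i)^2" using s0 unfolding S_def by (intro power_strict_mono) auto
    hence "real n - real k < real (card P')" using bound[OF PX'] sk unfolding S_def by linarith
    moreover have "real (card P') \<le> real (n - k)" using cP by simp
    moreover have "real (n - k) = real n - real k" using k by simp
    ultimately show False by linarith
  qed
  show ?thesis using c1 c2 unfolding P_def P'_def by simp
qed


lemma spectrum_from_decomp:
  fixes A U D :: "real mat"
  assumes A: "A \<in> carrier_mat n n" and U: "U \<in> carrier_mat n n" and D: "D \<in> carrier_mat n n"
    and dg: "diagonal_mat D" and UTU: "transpose_mat U * U = 1\<^sub>m n" and UUT: "U * transpose_mat U = 1\<^sub>m n"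
    and dec: "A = U * D * transpose_mat U"
  shows "char_poly A = (\<Prod>i<n. [:- D$$(i,i), 1:])"
    "eigenvalue A x \<longleftrightarrow> (\<exists>i<n. x = D$$(i,i))"
    "eigenvalue (map_mat complex_of_real A) z \<longleftrightarrow> (\<exists>i<n. z = complex_of_real (D$$(i,i)))"
proof -
  have UT: "transpose_mat U \<in> carrier_mat n n" using U by simp
  show cp: "char_poly A = (\<Prod>i<n. [:- D$$(i,i), 1:])"
    by (rule char_poly_diag_sim[OF A D dg U UT UUT UTU dec])
  show "eigenvalue A x \<longleftrightarrow> (\<exists>i<n. x = D$$(i,i))"
    unfolding eigenvalue_root_char_poly[OF A] cp poly_prod_lin_root ..
  let ?h = "map_mat complex_of_real"
  have mU: "?h U \<in> carrier_mat n n" and mUT: "?h (transpose_mat U) \<in> carrier_mat n n"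
    and mD: "?h D \<in> carrier_mat n n" and mA: "?h A \<in> carrier_mat n n" using U D A by auto
  have e1: "?h U * ?h (transpose_mat U) = 1\<^sub>m n"
    using of_real_hom.mat_hom_mult[OF U UT] UUT of_real_hom.mat_hom_one by metis
  have e2: "?h (transpose_mat U) * ?h U = 1\<^sub>m n"
    using of_real_hom.mat_hom_mult[OF UT U] UTU of_real_hom.mat_hom_one by metis
  have e3: "?h A = ?h U * ?h D * ?h (transpose_mat U)"
  proof -
    have UD: "U * D \<in> carrier_mat n n" using U D by simp
    have "?h A = ?h (U * D) * ?h (transpose_mat U)" using of_real_hom.mat_hom_mult[OF UD UT] dec by simp
    also have "?h (U * D) = ?h U * ?h D" using of_real_hom.mat_hom_mult[OF U D] .
    finally show ?thesis .
  qed
  have dg': "diagonal_mat (?h D)" using dg D unfolding diagonal_mat_def by auto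
  have cp': "char_poly (?h A) = (\<Prod>i<n. [:- (?h D)$$(i,i), 1:])"
    by (rule char_poly_diag_sim[OF mA mD dg' mU mUT e1 e2 e3])
  also have "\<dots> = (\<Prod>i<n. [:- complex_of_real (D$$(i,i)), 1:])"
    by (rule prod.cong) (use D in auto)
  finally have cp'': "char_poly (?h A) = (\<Prod>i<n. [:- complex_of_real (D$$(i,i)), 1:])" .
  show "eigenvalue (?h A) z \<longleftrightarrow> (\<exists>i<n. z = complex_of_real (D$$(i,i)))"
    unfolding eigenvalue_root_char_poly[OF mA] cp'' poly_prod_lin_root ..
qed


lemma diag_row_sum:
  fixes D :: "real mat"
  assumes D: "D \<in> carrier_mat n n" and dg: "diagonal_mat D" and i: "i < n"
  shows "(\<Sum>k<n. D$$(i,k) * f k) = D$$(i,i) * f i"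
proof -
  have "(\<Sum>k<n. D$$(i,k) * f k) = (\<Sum>k<n. if i = k then D$$(i,i) * f i else 0)"
    by (rule sum.cong) (use D dg i in \<open>auto simp: diagonal_mat_def\<close>)
  also have "\<dots> = D$$(i,i) * f i" using i by (subst sum.delta') auto
  finally show ?thesis .
qed

lemma decomp_numbers:
  fixes A U D :: "real mat"
  assumes A: "A \<in> carrier_mat n n" and U: "U \<in> carrier_mat n n" and D: "D \<in> carrier_mat n n"
    and dg: "diagonal_mat D" and UTU: "transpose_mat U * U = 1\<^sub>m n" and UUT: "U * transpose_mat U = 1\<^sub>m n"
    and dec: "A = U * D * transpose_mat U" and sym: "transpose_mat A = A"
  defines "onev \<equiv> vec n (\<lambda>_. 1 :: real)"
  defines "c \<equiv> transpose_mat U *\<^sub>v onev"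
  shows "mat_tr (A * transpose_mat A) = (\<Sum>i<n. (D$$(i,i))^2)"
    "onev \<bullet> (A *\<^sub>v onev) = (\<Sum>i<n. D$$(i,i) * (c$i)^2)"
    "(\<Sum>i<n. (c$i)^2) = real n"
    "\<And>i. i<n \<Longrightarrow> A *\<^sub>v col U i = D$$(i,i) \<cdot>\<^sub>v col U i"
    "\<And>i. i<n \<Longrightarrow> (\<Sum>j<n. (col U i $ j)^2) = 1"
    "\<And>i. i<n \<Longrightarrow> c $ i = (\<Sum>j<n. col U i $ j)"
proof -
  have UT: "transpose_mat U \<in> carrier_mat n n" using U by simp
  have onec: "onev \<in> carrier_vec n" unfolding onev_def by simp
  have cc: "c \<in> carrier_vec n" unfolding c_def using UT onec by simp
  note assoc = assoc_mult_mat[of _ n n _ n _ n]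
  have UTUX: "transpose_mat U * (U * X) = X" if "X \<in> carrier_mat n n" for X
    using that U UT by (metis assoc UTU left_mult_one_mat)
  have DD: "D * D \<in> carrier_mat n n" using D by simp
  have AA: "A * A = U * (D * D * transpose_mat U)"
  proof -
    have "A * A = U * (D * (transpose_mat U * (U * (D * transpose_mat U))))"
      unfolding dec using U D UT by (simp add: assoc)
    also have "transpose_mat U * (U * (D * transpose_mat U)) = D * transpose_mat U"
      using UTUX[of "D * transpose_mat U"] D UT by simp
    finally show ?thesis using U D UT by (simp add: assoc)
  qed
  have "mat_tr (A * transpose_mat A) = mat_tr (U * (D * D * transpose_mat U))" using sym AA by simp
  also have "\<dots> = mat_tr ((D * D * transpose_mat U) * U)"
    by (rule mat_tr_comm) (use U D UT in auto)
  also have "(D * D * transpose_mat U) * U = D * D" using DD UT U UTU by (simp add: assoc right_mult_one_mat[OF DD])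
  also have "mat_tr (D * D) = (\<Sum>i<n. (D$$(i,i))^2)"
    unfolding mat_tr_def
  proof (rule sum.cong)
    show "{..<dim_row (D * D)} = {..<n}" using D by simp
  next
    fix i assume "i \<in> {..<n}"
    hence i: "i < n" by simp
    have "(D * D) $$ (i,i) = (\<Sum>k<n. D$$(i,k) * D$$(k,i))"
      using D i by (simp add: scalar_prod_def atLeast0LessThan)
    also have "\<dots> = D$$(i,i) * D$$(i,i)" by (rule diag_row_sum[OF D dg i])
    finally show "(D * D) $$ (i,i) = (D$$(i,i))^2" by (simp add: power2_eq_square)
  qed
  finally show "mat_tr (A * transpose_mat A) = (\<Sum>i<n. (D$$(i,i))^2)" .
  have Dc: "D *\<^sub>v c = vec n (\<lambda>i. D$$(i,i) * c$i)"
  proof (rule eq_vecI)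
    fix i assume "i < dim_vec (vec n (\<lambda>i. D$$(i,i) * c$i))"
    hence i: "i < n" by simp
    have "(D *\<^sub>v c) $ i = (\<Sum>k<n. D$$(i,k) * c$k)" using D cc i by (simp add: scalar_prod_def atLeast0LessThan)
    also have "\<dots> = D$$(i,i) * c$i" by (rule diag_row_sum[OF D dg i])
    finally show "(D *\<^sub>v c) $ i = vec n (\<lambda>i. D$$(i,i) * c$i) $ i" using i by simp
  qed (use D in simp)
  have Dcc: "D *\<^sub>v c \<in> carrier_vec n" using D cc by simp
  have "A *\<^sub>v onev = U *\<^sub>v (D *\<^sub>v c)" unfolding dec c_def using U D UT onec
    by (simp del: assoc_mult_mat add: assoc_mult_mat_vec[of _ n n _ n])
  hence "onev \<bullet> (A *\<^sub>v onev) = onev \<bullet> (U *\<^sub>v (D *\<^sub>v c))" by simp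
  also have "\<dots> = c \<bullet> (D *\<^sub>v c)"
    using transpose_vec_mult_scalar[OF U Dcc onec, folded c_def] by simp
  also have "\<dots> = (\<Sum>i<n. D$$(i,i) * (c$i)^2)" unfolding Dc using cc
    by (simp add: scalar_prod_def atLeast0LessThan power2_eq_square mult.commute mult.left_commute)
  finally show "onev \<bullet> (A *\<^sub>v onev) = (\<Sum>i<n. D$$(i,i) * (c$i)^2)" .
  have "(\<Sum>i<n. (c$i)^2) = c \<bullet> c" using cc by (simp add: scalar_prod_def atLeast0LessThan power2_eq_square)
  also have "\<dots> = onev \<bullet> (U *\<^sub>v c)"
    using transpose_vec_mult_scalar[OF U cc onec, folded c_def] by simp
  also have "U *\<^sub>v c = onev" unfolding c_def using U UT onec UUT
    by (metis assoc_mult_mat_vec one_mult_mat_vec)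
  also have "onev \<bullet> onev = real n" unfolding onev_def by (simp add: scalar_prod_def)
  finally show "(\<Sum>i<n. (c$i)^2) = real n" .
  fix i assume i: "i < n"
  {
    let ?e = "unit_vec n i :: real vec"
    have ec: "?e \<in> carrier_vec n" by simp
    have colU: "col U i = U *\<^sub>v ?e"
      by (rule eq_vecI) (use U i in \<open>auto simp: scalar_prod_right_unit\<close>)
    have AU: "A * U = U * D" unfolding dec using U D UT UTU by (simp add: assoc)
    have De: "D *\<^sub>v ?e = D$$(i,i) \<cdot>\<^sub>v ?e"
    proof (rule eq_vecI)
      fix j assume "j < dim_vec (D$$(i,i) \<cdot>\<^sub>v ?e)"
      hence j: "j < n" by simp
      have "(D *\<^sub>v ?e) $ j = D$$(j,i)" using D i j by simp
      thus "(D *\<^sub>v ?e) $ j = (D$$(i,i) \<cdot>\<^sub>v ?e) $ j" using dg D i j by (auto simp: diagonal_mat_def)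
    qed (use D in simp)
    have "A *\<^sub>v col U i = (A * U) *\<^sub>v ?e" unfolding colU using A U ec by simp
    also have "\<dots> = U *\<^sub>v (D *\<^sub>v ?e)" unfolding AU using U D ec by simp
    also have "\<dots> = D$$(i,i) \<cdot>\<^sub>v col U i" unfolding De colU using U ec by (simp add: mult_mat_vec)
    finally show "A *\<^sub>v col U i = D$$(i,i) \<cdot>\<^sub>v col U i" .
  }
  {
    have "(\<Sum>j<n. (col U i $ j)^2) = col U i \<bullet> col U i"
      using U i by (simp add: scalar_prod_def atLeast0LessThan power2_eq_square)
    also have "\<dots> = (transpose_mat U * U) $$ (i,i)" using U i by simp
    also have "\<dots> = 1" using UTU i by simp
    finally show "(\<Sum>j<n. (col U i $ j)^2) = 1" .
  }
  {
    have "c $ i = row (transpose_mat U) i \<bullet> onev" unfolding c_def using UT i by simp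
    also have "\<dots> = col U i \<bullet> onev" using U i by simp
    also have "\<dots> = (\<Sum>j<n. col U i $ j)" unfolding onev_def using U i
      by (simp add: scalar_prod_def atLeast0LessThan)
    finally show "c $ i = (\<Sum>j<n. col U i $ j)" .
  }
qed


theorem theorem6:
  fixes A :: "real mat" and n k :: nat
  assumes "A \<in> carrier_mat n n"
    and "transpose_mat A = A"
    and "A \<noteq> 0\<^sub>m n n"
    and "1 \<le> k" and "2 * k < n"
    and "vec n (\<lambda>_. 1) \<bullet> (A *\<^sub>v vec n (\<lambda>_. 1)) \<ge> sqrt ((real n - real k)^2 + (real k)^2) * frobenius_norm A"
  shows "let \<rho> = spectral_radius (map_mat complex_of_real A) in
           eigenvalue A \<rho>
         \<and> order \<rho> (char_poly A) = 1
         \<and> (\<forall>\<mu>. eigenvalue A \<mu> \<longrightarrow> \<mu> \<le> \<rho>)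
         \<and> (\<exists>v. eigenvector A v \<rho>
               \<and> card {i. i < n \<and> v $ i \<ge> 0} \<ge> n - k + 1
               \<and> card {i. i < n \<and> v $ i > 0} \<ge> n - k)"
proof -
  note A = assms(1) and sym = assms(2) and A0 = assms(3) and k = assms(4,5) and hyp = assms(6)
  have n2: "2 \<le> n" using k by simp
  obtain U D where U: "U \<in> carrier_mat n n" and D: "D \<in> carrier_mat n n" and dg: "diagonal_mat D"
    and UTU: "transpose_mat U * U = 1\<^sub>m n" and dec: "A = U * D * transpose_mat U"
    using spectral[OF A sym] by blast
  have UT: "transpose_mat U \<in> carrier_mat n n" using U by simp
  have UUT: "U * transpose_mat U = 1\<^sub>m n" using mat_mult_left_right_inverse[OF UT U UTU] .
  note N = decomp_numbers[OF A U D dg UTU UUT dec sym]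
  note SP = spectrum_from_decomp[OF A U D dg UTU UUT dec]
  define d where "d i = D$$(i,i)" for i
  define c where "c = transpose_mat U *\<^sub>v vec n (\<lambda>_. 1::real)"
  have fin: "finite (d ` {..<n})" by simp
  have ne: "d ` {..<n} \<noteq> {}" using n2 by (auto simp: lessThan_empty_iff)
  obtain i0 where i0: "i0 < n" "d i0 = Max (d ` {..<n})" using Max_in[OF fin ne] by auto
  have amax: "d i \<le> d i0" if "i < n" for i using Max_ge[OF fin] that i0(2) by auto
  have Spos: "(\<Sum>i<n. (d i)^2) > 0"
  proof (rule ccontr)
    assume "\<not> (\<Sum>i<n. (d i)^2) > 0"
    hence "(\<Sum>i<n. (d i)^2) = 0" by (smt (verit) sum_nonneg zero_le_power2)
    hence z: "\<forall>i\<in>{..<n}. (d i)^2 = 0" by (subst sum_nonneg_eq_0_iff[symmetric]) auto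
    have "D = 0\<^sub>m n n"
    proof (rule eq_matI)
      fix i j assume "i < dim_row (0\<^sub>m n n)" "j < dim_col (0\<^sub>m n n)"
      hence ij: "i < n" "j < n" by auto
      show "D $$ (i,j) = 0\<^sub>m n n $$ (i,j)"
      proof (cases "i = j")
        case True thus ?thesis using z ij unfolding d_def by simp
      next
        case False thus ?thesis using dg D ij unfolding diagonal_mat_def by auto
      qed
    qed (use D in auto)
    hence "A = 0\<^sub>m n n" unfolding dec using U UT by simp
    thus False using A0 by simp
  qed
  have q: "sqrt ((real n - real k)^2 + (real k)^2) * sqrt (\<Sum>i<n. (d i)^2) \<le> (\<Sum>i<n. d i * (c$i)^2)"
    using hyp unfolding frobenius_norm_def N(1) N(2) d_def c_def .
  have KR: "(\<forall>j<n. j \<noteq> i0 \<longrightarrow> \<bar>d j\<bar> < d i0) \<and> real n - real k \<le> (c$i0)^2"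
    by (rule key_real[OF k N(3)[folded c_def] Spos q i0(1) amax])
  hence part1: "\<And>j. j < n \<Longrightarrow> j \<noteq> i0 \<Longrightarrow> \<bar>d j\<bar> < d i0" and part2: "real n - real k \<le> (c$i0)^2"
    by auto
  obtain j0 where j0: "j0 < n" "j0 \<noteq> i0" using n2 i0
    by (metis One_nat_def Suc_1 Suc_le_lessD less_Suc_eq_0_disj less_one not_less_eq)
  have apos: "d i0 > 0" using part1[OF j0] by simp
  let ?C = "map_mat complex_of_real A"
  have spz: "z \<in> spectrum ?C \<longleftrightarrow> (\<exists>i<n. z = complex_of_real (d i))" for z
    unfolding spectrum_def using SP(3)[of z] unfolding d_def by simp
  have "spectrum ?C = (\<lambda>i. complex_of_real (d i)) ` {..<n}"
    using spz by blast
  hence "norm ` spectrum ?C = (\<lambda>i. \<bar>d i\<bar>) ` {..<n}"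
    by (simp add: image_image)
  hence rho: "spectral_radius ?C = d i0"
    unfolding spectral_radius_def
  proof -
    assume eq: "norm ` spectrum ?C = (\<lambda>i. \<bar>d i\<bar>) ` {..<n}"
    show "Max (norm ` spectrum ?C) = d i0" unfolding eq
    proof (rule Max_eqI)
      fix y assume "y \<in> (\<lambda>i. \<bar>d i\<bar>) ` {..<n}"
      then obtain j where j: "j < n" "y = \<bar>d j\<bar>" by auto
      show "y \<le> d i0" using part1[of j] j apos by (cases "j = i0") auto
    next
      show "d i0 \<in> (\<lambda>i. \<bar>d i\<bar>) ` {..<n}" using i0 apos by (auto intro!: image_eqI[of _ _ i0])
    qed auto
  qed
  have ev: "eigenvalue A (d i0)" using SP(2) i0 unfolding d_def by auto
  have "{i. i < n \<and> d i = d i0} = {i0}" using part1 i0 by fastforce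
  hence ord: "order (d i0) (char_poly A) = 1" using SP(1) order_prod_lin[of "d i0" d n]
    unfolding d_def by simp
  have mx: "\<forall>\<mu>. eigenvalue A \<mu> \<longrightarrow> \<mu> \<le> d i0" using SP(2) amax unfolding d_def by auto
  define u where "u = col U i0"
  define \<sigma> where "\<sigma> = (if 0 \<le> c$i0 then 1 else -1::real)"
  define v where "v = \<sigma> \<cdot>\<^sub>v u"
  have uc: "u \<in> carrier_vec n" unfolding u_def by (rule carrier_vecI) (use U in simp)
  have vc: "v \<in> carrier_vec n" unfolding v_def using uc by simp
  have s2: "\<sigma> * \<sigma> = 1" unfolding \<sigma>_def by simp
  have vj: "v $ j = \<sigma> * u $ j" if "j < n" for j unfolding v_def using uc that by simp
  have u2: "(\<Sum>j<n. (u $ j)^2) = 1" unfolding u_def by (rule N(5)[OF i0(1)])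
  have v2: "(\<Sum>j<n. (v $ j)^2) = 1"
  proof -
    have "(\<Sum>j<n. (v $ j)^2) = (\<Sum>j<n. (\<sigma> * \<sigma>) * (u $ j)^2)"
      by (rule sum.cong) (auto simp: vj power2_eq_square mult.commute mult.left_commute)
    thus ?thesis using s2 u2 by simp
  qed
  have cu: "c $ i0 = (\<Sum>j<n. u $ j)" unfolding c_def u_def by (rule N(6)[OF i0(1)])
  have sv: "(\<Sum>j<n. v $ j) = \<sigma> * c $ i0"
    unfolding cu by (simp add: vj sum_distrib_left)
  have sv0: "0 \<le> (\<Sum>j<n. v $ j)" unfolding sv \<sigma>_def by simp
  have "(\<sigma> * c $ i0)^2 = (\<sigma> * \<sigma>) * (c $ i0)^2" by (simp add: power2_eq_square mult_ac)
  hence sv2: "real n - real k \<le> (\<Sum>j<n. v $ j)^2" unfolding sv using part2 s2 by simp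
  have cards: "n - k + 1 \<le> card {i. i<n \<and> 0 \<le> v $ i} \<and> n - k \<le> card {i. i<n \<and> 0 < v $ i}"
    by (rule card_signs[OF v2 sv0 sv2]) (use k in auto)
  have v0: "v \<noteq> 0\<^sub>v n"
  proof
    assume "v = 0\<^sub>v n"
    hence "(\<Sum>j<n. (v $ j)^2) = 0" by simp
    thus False using v2 by simp
  qed
  have Av: "A *\<^sub>v v = d i0 \<cdot>\<^sub>v v"
  proof -
    have "A *\<^sub>v v = \<sigma> \<cdot>\<^sub>v (A *\<^sub>v u)" unfolding v_def using A uc by (simp add: mult_mat_vec)
    also have "A *\<^sub>v u = d i0 \<cdot>\<^sub>v u" unfolding u_def d_def by (rule N(4)[OF i0(1)])
    finally show ?thesis unfolding v_def by (simp add: smult_smult_assoc mult.commute)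
  qed
  have evec: "eigenvector A v (d i0)" unfolding eigenvector_def using A vc v0 Av by simp
  show ?thesis unfolding Let_def rho using ev ord mx evec cards by blast
qed

end
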